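(* For all $0\le\lambda<1$ and $0\le d<1$ there is a number $g(\lambda,d)<1$, depending only on $\lambda$ and $d$, with the following property. Let $H$ be a finite-dimensional complex Hilbert space, $U:H\to H$ unitary and $A:H\to H$ Hermitian such that $1$ is an eigenvalue of $A$ and every other eigenvalue $\mu$ of $A$ satisfies $|\mu|\le\lambda$. Let $A_{\max}$ be the eigenspace of $A$ for the eigenvalue $1$ and $P_{\max}$ the orthogonal projection onto $A_{\max}$, and assume $\|P_{\max}Uv\|\le d\|v\|$ for all $v\in A_{\max}$. Then $\|(UA)^2v\|\le g(\lambda,d)\|v\|$ for all $v\in H$, and hence $\|(UA)^k\|_{op}\le g(\lambda,d)^{\lfloor k/2\rfloor}$ for all $k\ge0$.
   Context: $\|\cdot\|_{op}$ is the operator norm. *)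

theory Defs
  imports Complex_Main "Jordan_Normal_Form.Jordan_Normal_Form" "Jordan_Normal_Form.Schur_Decomposition"
begin

text \<open>The finite-dimensional complex Hilbert space H is modelled as C^n (column vectors of
  dimension n), operators on H as complex n x n matrices.\<close>

definition vnorm :: "complex vec \<Rightarrow> real" where
  "vnorm v = sqrt (\<Sum>i<dim_vec v. (cmod (v $ i))^2)"

definition unitary_mat :: "complex mat \<Rightarrow> bool" where
  "unitary_mat U \<longleftrightarrow> U \<in> carrier_mat (dim_row U) (dim_row U) \<and>
     mat_adjoint U * U = 1\<^sub>m (dim_row U) \<and> U * mat_adjoint U = 1\<^sub>m (dim_row U)"

definition hermitian_mat :: "complex mat \<Rightarrow> bool" where
  "hermitian_mat A \<longleftrightarrow> A \<in> carrier_mat (dim_row A) (dim_row A) \<and> mat_adjoint A = A"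

definition eigenspace :: "complex mat \<Rightarrow> complex \<Rightarrow> complex vec set" where
  "eigenspace A \<mu> = {v \<in> carrier_vec (dim_row A). A *\<^sub>v v = \<mu> \<cdot>\<^sub>v v}"

definition orth_proj :: "complex vec set \<Rightarrow> complex vec \<Rightarrow> complex vec" where
  "orth_proj S v = (THE p. p \<in> S \<and> (\<forall>w\<in>S. (v - p) \<bullet>c w = 0))"

definition opnorm :: "complex mat \<Rightarrow> real" where
  "opnorm M = Sup {vnorm (M *\<^sub>v v) | v. v \<in> carrier_vec (dim_col M) \<and> vnorm v \<le> 1}"

end

theory Submission
  imports Defs "Jordan_Normal_Form.Spectral_Radius" "HOL-Analysis.L2_Norm"
begin


lemma adj_dims[simp]: "dim_row (mat_adjoint M) = dim_col M" "dim_col (mat_adjoint M) = dim_row M"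
  unfolding mat_adjoint_def by (auto simp: mat_of_rows_def)

lemma adj_index[simp]: "i < dim_col M \<Longrightarrow> j < dim_row M \<Longrightarrow> mat_adjoint M $$ (i,j) = cnj (M $$ (j,i))"
  unfolding mat_adjoint_def by (auto simp: mat_of_rows_def)

lemma adj_carrier[simp]: "M \<in> carrier_mat n m \<Longrightarrow> mat_adjoint M \<in> carrier_mat m n"
  unfolding carrier_mat_def by simp

lemma adj_adj[simp]: "mat_adjoint (mat_adjoint (M::complex mat)) = M"
proof (rule eq_matI)
  fix i j assume "i < dim_row M" "j < dim_col M"
  then show "mat_adjoint (mat_adjoint M) $$ (i,j) = M $$ (i,j)" by simp
qed simp_all

lemma adj_one[simp]: "mat_adjoint (1\<^sub>m n :: complex mat) = 1\<^sub>m n"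
proof (rule eq_matI)
  fix i j assume "i < dim_row (1\<^sub>m n :: complex mat)" "j < dim_col (1\<^sub>m n :: complex mat)"
  then show "mat_adjoint (1\<^sub>m n :: complex mat) $$ (i,j) = (1\<^sub>m n :: complex mat) $$ (i,j)" by simp
qed simp_all

lemma adj_zero[simp]: "mat_adjoint (0\<^sub>m n m :: complex mat) = 0\<^sub>m m n"
proof (rule eq_matI)
  fix i j assume "i < dim_row (0\<^sub>m m n :: complex mat)" "j < dim_col (0\<^sub>m m n :: complex mat)"
  then show "mat_adjoint (0\<^sub>m n m :: complex mat) $$ (i,j) = (0\<^sub>m m n :: complex mat) $$ (i,j)" by simp
qed simp_all

lemma adj_mult: assumes A: "A \<in> carrier_mat n m" and B: "B \<in> carrier_mat m k"
  shows "mat_adjoint (A * B :: complex mat) = mat_adjoint B * mat_adjoint A"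
proof (rule eq_matI)
  fix i j assume ij: "i < dim_row (mat_adjoint B * mat_adjoint A)" "j < dim_col (mat_adjoint B * mat_adjoint A)"
  hence i: "i < k" and j: "j < n" using A B by auto
  have "mat_adjoint (A * B) $$ (i, j) = cnj (\<Sum>l<m. A$$(j,l) * B$$(l,i))"
    using A B i j by (simp add: scalar_prod_def lessThan_atLeast0)
  also have "\<dots> = (\<Sum>l<m. cnj (B$$(l,i)) * cnj (A$$(j,l)))" by (simp add: mult.commute)
  also have "\<dots> = (mat_adjoint B * mat_adjoint A) $$ (i, j)"
    using A B i j by (simp add: scalar_prod_def lessThan_atLeast0)
  finally show "mat_adjoint (A * B) $$ (i, j) = (mat_adjoint B * mat_adjoint A) $$ (i, j)" .
qed (use A B in auto)

lemma adj_four_block: assumes "A \<in> carrier_mat n1 m1" "D \<in> carrier_mat n2 m2"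
  shows "mat_adjoint (four_block_mat A (0\<^sub>m n1 m2) (0\<^sub>m n2 m1) D :: complex mat)
     = four_block_mat (mat_adjoint A) (0\<^sub>m m1 n2) (0\<^sub>m m2 n1) (mat_adjoint D)"
proof -
  have d: "dim_row A = n1" "dim_col A = m1" "dim_row D = n2" "dim_col D = m2" using assms by auto
  show ?thesis
  proof (rule eq_matI)
    fix i j assume "i < dim_row (four_block_mat (mat_adjoint A) (0\<^sub>m m1 n2) (0\<^sub>m m2 n1) (mat_adjoint D))"
     "j < dim_col (four_block_mat (mat_adjoint A) (0\<^sub>m m1 n2) (0\<^sub>m m2 n1) (mat_adjoint D))"
    hence i: "i < m1 + m2" and j: "j < n1 + n2" by (simp_all add: d)
    show "mat_adjoint (four_block_mat A (0\<^sub>m n1 m2) (0\<^sub>m n2 m1) D) $$ (i, j) =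
         four_block_mat (mat_adjoint A) (0\<^sub>m m1 n2) (0\<^sub>m m2 n1) (mat_adjoint D) $$ (i, j)"
      using i j by (cases "i < m1"; cases "j < n1") (simp_all add: d)
  qed (simp_all add: d)
qed

lemma cinner_def: "v \<bullet>c w = (\<Sum>i<dim_vec w. v $ i * cnj (w $ i))"
  unfolding scalar_prod_def by (auto intro!: sum.cong simp: lessThan_atLeast0)

lemma inner_adj: assumes M: "M \<in> carrier_mat n m" and x: "x \<in> carrier_vec m" and y: "y \<in> carrier_vec n"
  shows "(M *\<^sub>v x) \<bullet>c y = x \<bullet>c (mat_adjoint M *\<^sub>v (y :: complex vec))"
proof -
  have "(M *\<^sub>v x) \<bullet>c y = (\<Sum>i<n. (\<Sum>j<m. M $$ (i,j) * x $ j) * cnj (y $ i))"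
    using M x y by (simp add: cinner_def scalar_prod_def lessThan_atLeast0)
  also have "\<dots> = (\<Sum>i<n. \<Sum>j<m. M $$ (i,j) * x $ j * cnj (y $ i))"
    by (simp add: sum_distrib_right)
  also have "\<dots> = (\<Sum>j<m. \<Sum>i<n. M $$ (i,j) * x $ j * cnj (y $ i))"
    by (rule sum.swap)
  also have "\<dots> = (\<Sum>j<m. x $ j * cnj (\<Sum>i<n. cnj (M $$ (i,j)) * y $ i))"
    by (auto simp: sum_distrib_left intro!: sum.cong)
  also have "\<dots> = x \<bullet>c (mat_adjoint M *\<^sub>v y)"
    using M x y by (simp add: cinner_def scalar_prod_def lessThan_atLeast0 sum_distrib_left mult_ac)
  finally show ?thesis .
qed

lemma vnorm_sq: "vnorm v ^ 2 = (\<Sum>i<dim_vec v. (cmod (v $ i))^2)"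
  unfolding vnorm_def by (rule real_sqrt_pow2) (auto intro!: sum_nonneg)

lemma cinner_self: "v \<bullet>c v = complex_of_real (vnorm v ^ 2)"
proof -
  have "v \<bullet>c v = (\<Sum>i<dim_vec v. complex_of_real ((cmod (v $ i))^2))"
    unfolding cinner_def by (intro sum.cong refl) (simp add: complex_norm_square[symmetric])
  also have "\<dots> = complex_of_real (vnorm v ^ 2)" unfolding vnorm_sq of_real_sum ..
  finally show ?thesis .
qed

lemma vnorm_nonneg[simp]: "vnorm v \<ge> 0"
  unfolding vnorm_def by (auto intro!: sum_nonneg)

lemma vnorm_eq_iff: "vnorm v = vnorm w \<longleftrightarrow> v \<bullet>c v = w \<bullet>c w"
proof -
  have "v \<bullet>c v = w \<bullet>c w \<longleftrightarrow> vnorm v ^ 2 = vnorm w ^ 2" unfolding cinner_self of_real_eq_iff ..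
  thus ?thesis by (metis power2_eq_iff_nonneg vnorm_nonneg)
qed

lemma unitary_inner: assumes Q: "Q \<in> carrier_mat n n" and QQ: "mat_adjoint Q * Q = 1\<^sub>m n"
  and x: "x \<in> carrier_vec n" and y: "y \<in> carrier_vec n"
  shows "(Q *\<^sub>v x) \<bullet>c (Q *\<^sub>v y) = x \<bullet>c (y :: complex vec)"
proof -
  have "(Q *\<^sub>v x) \<bullet>c (Q *\<^sub>v y) = x \<bullet>c (mat_adjoint Q *\<^sub>v (Q *\<^sub>v y))"
    using inner_adj[OF Q x] Q y by auto
  also have "mat_adjoint Q *\<^sub>v (Q *\<^sub>v y) = y"
  proof -
    have "mat_adjoint Q *\<^sub>v (Q *\<^sub>v y) = (mat_adjoint Q * Q) *\<^sub>v y"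
      by (rule assoc_mult_mat_vec[symmetric, of _ n n _ n]) (use Q y in auto)
    also have "\<dots> = y" using QQ y by simp
    finally show ?thesis .
  qed
  finally show ?thesis .
qed

lemma unitary_vnorm: assumes Q: "Q \<in> carrier_mat n n" and QQ: "mat_adjoint Q * Q = 1\<^sub>m n"
  and x: "x \<in> carrier_vec n"
  shows "vnorm (Q *\<^sub>v x) = vnorm x"
  using unitary_inner[OF Q QQ x x] by (simp add: vnorm_eq_iff)


lemma vnorm_zero: assumes "vnorm v = 0" shows "v = 0\<^sub>v (dim_vec v)"
proof -
  have "(\<Sum>i<dim_vec v. (cmod (v $ i))^2) = 0" using assms vnorm_sq[of v] by simp
  hence "\<forall>i\<in>{..<dim_vec v}. (cmod (v $ i))^2 = 0"
    by (subst sum_nonneg_eq_0_iff[symmetric]) auto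
  thus ?thesis by (intro eq_vecI) auto
qed

lemma smult_cinner: assumes "x \<in> carrier_vec n" "y \<in> carrier_vec n"
  shows "(a \<cdot>\<^sub>v x) \<bullet>c (b \<cdot>\<^sub>v y) = a * cnj b * (x \<bullet>c (y :: complex vec))"
  using assms by (simp add: cinner_def sum_distrib_left mult_ac)

lemma adj_mult_self_index: assumes W: "W \<in> carrier_mat n m" and i: "i < m" and j: "j < m"
  shows "(mat_adjoint W * W) $$ (i,j) = col W j \<bullet>c col (W :: complex mat) i"
  using W i j by (simp add: cinner_def scalar_prod_def lessThan_atLeast0 mult.commute)

lemma onb_completion:
  assumes u: "(u :: complex vec) \<in> carrier_vec n" and uu: "u \<bullet>c u = 1"
  shows "\<exists>W. W \<in> carrier_mat n n \<and> mat_adjoint W * W = 1\<^sub>m n \<and> W * mat_adjoint W = 1\<^sub>m n \<and> col W 0 = u"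
proof -
  have u0: "u \<noteq> 0\<^sub>v n" using uu u by auto
  have vu: "vnorm u = 1" using uu unfolding cinner_self
    by (metis of_real_1 of_real_eq_iff power2_eq_1_iff vnorm_nonneg le_minus_one_simps(3))
  interpret cof_vec_space n "TYPE(complex)" .
  note bc = basis_completion[OF u u0]
  define ws where "ws = gram_schmidt n (basis_completion u)"
  note gs = gram_schmidt_result[OF bc(2) bc(4) bc(5) ws_def]
  have n0: "n > 0" using u u0 by (cases n) auto
  obtain vs where bv: "basis_completion u = u # vs" using bc(6) bc(7) n0 by (cases "basis_completion u") auto
  have hdws: "hd ws = u" unfolding ws_def bv using u by simp
  have lws: "length ws = n" using gs bc by simp
  have ws0: "ws ! 0 = u" using hdws lws n0 by (cases ws) auto
  have wsc: "\<And>i. i < n \<Longrightarrow> ws ! i \<in> carrier_vec n" using gs(3) lws by auto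
  define us where "us = map (\<lambda>w. complex_of_real (1 / vnorm w) \<cdot>\<^sub>v w) ws"
  have lus: "length us = n" unfolding us_def using lws by simp
  have usc: "\<And>i. i < n \<Longrightarrow> us ! i \<in> carrier_vec n" unfolding us_def using wsc lws by auto
  have usi: "\<And>i. i < n \<Longrightarrow> us ! i = complex_of_real (1 / vnorm (ws ! i)) \<cdot>\<^sub>v ws ! i"
    unfolding us_def using lws by simp
  have orth: "us ! i \<bullet>c us ! j = (if i = j then 1 else 0)" if i: "i < n" and j: "j < n" for i j
  proof (cases "i = j")
    case True
    have "ws ! i \<bullet>c ws ! i \<noteq> 0" using corthogonalD[OF gs(2), of i i] i lws by auto
    hence nz: "vnorm (ws ! i) \<noteq> 0" unfolding cinner_self by auto
    have "us ! i \<bullet>c us ! i = complex_of_real (1 / vnorm (ws ! i)) * complex_of_real (1 / vnorm (ws ! i)) * complex_of_real (vnorm (ws ! i) ^ 2)"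
      unfolding usi[OF i] by (subst smult_cinner[OF wsc[OF i] wsc[OF i]]) (simp add: cinner_self)
    also have "\<dots> = 1" using nz by (simp add: power2_eq_square field_simps)
    finally show ?thesis using True by simp
  next
    case False
    have "ws ! i \<bullet>c ws ! j = 0" using corthogonalD[OF gs(2), of i j] i j lws False by auto
    thus ?thesis unfolding usi[OF i] usi[OF j] using False
      by (subst smult_cinner[OF wsc[OF i] wsc[OF j]]) simp
  qed
  define W where "W = mat_of_cols n us"
  have W: "W \<in> carrier_mat n n" unfolding W_def using lus by (metis mat_of_cols_carrier(1))
  have colW: "\<And>i. i < n \<Longrightarrow> col W i = us ! i" unfolding W_def using lus usc by simp
  have WW: "mat_adjoint W * W = 1\<^sub>m n"
  proof (rule eq_matI)
    fix i j assume "i < dim_row (1\<^sub>m n :: complex mat)" "j < dim_col (1\<^sub>m n :: complex mat)"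
    hence i: "i < n" and j: "j < n" by auto
    show "(mat_adjoint W * W) $$ (i,j) = (1\<^sub>m n :: complex mat) $$ (i,j)"
      unfolding adj_mult_self_index[OF W i j] colW[OF i] colW[OF j] orth[OF j i] using i j by auto
  qed (use W in auto)
  have WW2: "W * mat_adjoint W = 1\<^sub>m n"
    by (rule mat_mult_left_right_inverse[OF _ W WW]) (use W in simp)
  have "col W 0 = u" using colW[OF n0] usi[OF n0] ws0 vu by simp
  thus ?thesis using W WW WW2 by blast
qed


lemma spectral:
  assumes "(A::complex mat) \<in> carrier_mat n n" "mat_adjoint A = A"
  shows "\<exists>Q D. Q \<in> carrier_mat n n \<and> mat_adjoint Q * Q = 1\<^sub>m n \<and> Q * mat_adjoint Q = 1\<^sub>m n \<and>
     D \<in> carrier_mat n n \<and> diagonal_mat D \<and> mat_adjoint Q * A * Q = D"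
  using assms
proof (induction n arbitrary: A)
  case 0
  then show ?case by (intro exI[of _ "1\<^sub>m 0"] exI[of _ A]) (auto simp: diagonal_mat_def)
next
  case (Suc m A)
  let ?n = "Suc m"
  have A: "A \<in> carrier_mat ?n ?n" and AH: "mat_adjoint A = A" using Suc.prems by auto
  obtain e where "eigenvalue A e" using spectrum_non_empty[OF A] unfolding spectrum_def by auto
  then obtain v where v: "v \<in> carrier_vec ?n" "v \<noteq> 0\<^sub>v ?n" "A *\<^sub>v v = e \<cdot>\<^sub>v v"
    unfolding eigenvalue_def eigenvector_def using A by auto
  have nv: "vnorm v \<noteq> 0" using vnorm_zero[of v] v by auto
  define u where "u = complex_of_real (1 / vnorm v) \<cdot>\<^sub>v v"
  have u: "u \<in> carrier_vec ?n" unfolding u_def using v by simp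
  have uu: "u \<bullet>c u = 1"
  proof -
    have "u \<bullet>c u = complex_of_real (1 / vnorm v) * cnj (complex_of_real (1 / vnorm v)) * (v \<bullet>c v)"
      unfolding u_def by (rule smult_cinner[OF v(1) v(1)])
    also have "\<dots> = 1" unfolding cinner_self using nv by (simp add: power2_eq_square field_simps)
    finally show ?thesis .
  qed
  have Au: "A *\<^sub>v u = e \<cdot>\<^sub>v u" unfolding u_def mult_mat_vec[OF A v(1)] v(3)
    by (simp add: smult_smult_assoc mult.commute)
  obtain W where W: "W \<in> carrier_mat ?n ?n" and WW: "mat_adjoint W * W = 1\<^sub>m ?n"
    and WW2: "W * mat_adjoint W = 1\<^sub>m ?n" and W0: "col W 0 = u"
    using onb_completion[OF u uu] by blast
  have aW: "mat_adjoint W \<in> carrier_mat ?n ?n" using W by simp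
  define A' where "A' = mat_adjoint W * (A * W)"
  have AW: "A * W \<in> carrier_mat ?n ?n" using mult_carrier_mat[OF A W] .
  have A'c: "A' \<in> carrier_mat ?n ?n" unfolding A'_def using mult_carrier_mat[OF aW AW] .
  note dims = carrier_matD[OF A] carrier_matD[OF W] carrier_matD[OF aW] carrier_matD[OF AW] carrier_matD[OF A'c]
  have A'H: "mat_adjoint A' = A'"
  proof -
    have "mat_adjoint A' = mat_adjoint (A * W) * mat_adjoint (mat_adjoint W)"
      unfolding A'_def by (rule adj_mult[OF aW AW])
    also have "\<dots> = (mat_adjoint W * mat_adjoint A) * W" using adj_mult[OF A W] by simp
    also have "\<dots> = A'" unfolding A'_def AH by (rule assoc_mult_mat[OF aW A W])
    finally show ?thesis .
  qed
  have col0: "A' $$ (i,0) = (if i = 0 then e else 0)" if i: "i < ?n" for i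
  proof -
    have "col (A * W) 0 = A *\<^sub>v col W 0" using col_mult2[OF A W, of 0] by simp
    hence c: "col (A * W) 0 = e \<cdot>\<^sub>v col W 0" using W0 Au by simp
    have "A' $$ (i,0) = row (mat_adjoint W) i \<bullet> col (A * W) 0" unfolding A'_def using dims i by simp
    also have "\<dots> = e * (row (mat_adjoint W) i \<bullet> col W 0)" unfolding c
      by (rule scalar_prod_smult_distrib[of _ ?n]) (use W i dims W0 u in auto)
    also have "row (mat_adjoint W) i \<bullet> col W 0 = (mat_adjoint W * W) $$ (i,0)" using dims i by simp
    also have "\<dots> = (if i = 0 then 1 else 0)" unfolding WW using i by simp
    finally show ?thesis by simp
  qed
  have row0: "A' $$ (0,j) = (if j = 0 then e else 0)" if j: "j < ?n" for j
  proof (cases "j = 0")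
    case True thus ?thesis using col0[of 0] by simp
  next
    case False
    have "A' $$ (0,j) = mat_adjoint A' $$ (0,j)" using A'H by simp
    also have "\<dots> = cnj (A' $$ (j,0))" using A'c j by simp
    finally show ?thesis using col0[OF j] False by simp
  qed
  define A3 where "A3 = mat m m (\<lambda>(i,j). A' $$ (Suc i, Suc j))"
  define E1 where "E1 = (mat 1 1 (\<lambda>_. e) :: complex mat)"
  have A3c: "A3 \<in> carrier_mat m m" unfolding A3_def by simp
  have E1c: "E1 \<in> carrier_mat 1 1" unfolding E1_def by simp
  have A'blk: "A' = four_block_mat E1 (0\<^sub>m 1 m) (0\<^sub>m m 1) A3"
  proof (rule eq_matI)
    fix i j assume "i < dim_row (four_block_mat E1 (0\<^sub>m 1 m) (0\<^sub>m m 1) A3)"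
      "j < dim_col (four_block_mat E1 (0\<^sub>m 1 m) (0\<^sub>m m 1) A3)"
    hence i: "i < ?n" and j: "j < ?n" using carrier_matD[OF A3c] carrier_matD[OF E1c] by simp_all
    show "A' $$ (i,j) = four_block_mat E1 (0\<^sub>m 1 m) (0\<^sub>m m 1) A3 $$ (i,j)"
    proof (cases "i = 0")
      case True thus ?thesis using j row0[OF j] by (simp add: E1_def A3_def)
    next
      case False
      then obtain i' where i': "i = Suc i'" by (cases i) auto
      show ?thesis
      proof (cases "j = 0")
        case True thus ?thesis using i col0[OF i] False by (simp add: E1_def A3_def)
      next
        case False
        then obtain j' where j': "j = Suc j'" by (cases j) auto
        show ?thesis using i j unfolding i' j' by (simp add: E1_def A3_def)
      qed
    qed
  qed (use carrier_matD[OF A'c] carrier_matD[OF A3c] carrier_matD[OF E1c] in simp_all)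
  have A3H: "mat_adjoint A3 = A3"
  proof (rule eq_matI)
    fix i j assume "i < dim_row A3" "j < dim_col A3"
    hence i: "i < m" and j: "j < m" using carrier_matD[OF A3c] by simp_all
    have "mat_adjoint A3 $$ (i,j) = cnj (A' $$ (Suc j, Suc i))" using i j by (simp add: A3_def)
    also have "\<dots> = mat_adjoint A' $$ (Suc i, Suc j)" using A'c i j by simp
    also have "\<dots> = A3 $$ (i,j)" unfolding A'H using i j by (simp add: A3_def)
    finally show "mat_adjoint A3 $$ (i,j) = A3 $$ (i,j)" .
  qed (use carrier_matD[OF A3c] in simp_all)
  obtain Q3 D3 where Q3: "Q3 \<in> carrier_mat m m" and Q3Q3: "mat_adjoint Q3 * Q3 = 1\<^sub>m m"
    and Q3Q3': "Q3 * mat_adjoint Q3 = 1\<^sub>m m" and D3: "D3 \<in> carrier_mat m m"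
    and D3d: "diagonal_mat D3" and QAQ3: "mat_adjoint Q3 * A3 * Q3 = D3"
    using Suc.IH[OF A3c A3H] by blast
  have aQ3: "mat_adjoint Q3 \<in> carrier_mat m m" using Q3 by simp
  define B where "B = four_block_mat (1\<^sub>m 1) (0\<^sub>m 1 m) (0\<^sub>m m 1) Q3"
  have Bc: "B \<in> carrier_mat ?n ?n" unfolding B_def using Q3 by (metis four_block_carrier_mat one_carrier_mat plus_1_eq_Suc)
  have adjB: "mat_adjoint B = four_block_mat (1\<^sub>m 1) (0\<^sub>m 1 m) (0\<^sub>m m 1) (mat_adjoint Q3)"
    unfolding B_def by (subst adj_four_block[OF one_carrier_mat Q3]) simp
  have aB: "mat_adjoint B \<in> carrier_mat ?n ?n" using Bc by simp
  have BB: "mat_adjoint B * B = 1\<^sub>m ?n"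
  proof -
    have "mat_adjoint B * B = four_block_mat (1\<^sub>m 1 * 1\<^sub>m 1 + 0\<^sub>m 1 m * 0\<^sub>m m 1) (1\<^sub>m 1 * 0\<^sub>m 1 m + 0\<^sub>m 1 m * Q3)
       (0\<^sub>m m 1 * 1\<^sub>m 1 + mat_adjoint Q3 * 0\<^sub>m m 1) (0\<^sub>m m 1 * 0\<^sub>m 1 m + mat_adjoint Q3 * Q3)"
      unfolding adjB unfolding B_def by (rule mult_four_block_mat[of _ 1 1 _ m _ m _ _ 1 _ m]) (use Q3 aQ3 in simp_all)
    also have "\<dots> = four_block_mat (1\<^sub>m 1) (0\<^sub>m 1 m) (0\<^sub>m m 1) (1\<^sub>m m)"
      unfolding Q3Q3 using Q3 aQ3 by (simp add: left_mult_zero_mat right_mult_zero_mat)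
    also have "\<dots> = 1\<^sub>m ?n" by simp
    finally show ?thesis .
  qed
  have BB2: "B * mat_adjoint B = 1\<^sub>m ?n"
    by (rule mat_mult_left_right_inverse[OF aB Bc BB])
  define D where "D = four_block_mat E1 (0\<^sub>m 1 m) (0\<^sub>m m 1) D3"
  have Dc: "D \<in> carrier_mat ?n ?n" unfolding D_def using E1c D3 by (metis four_block_carrier_mat plus_1_eq_Suc)
  have BAB: "mat_adjoint B * A' * B = D"
  proof -
    have "mat_adjoint B * A' = four_block_mat (1\<^sub>m 1 * E1 + 0\<^sub>m 1 m * 0\<^sub>m m 1) (1\<^sub>m 1 * 0\<^sub>m 1 m + 0\<^sub>m 1 m * A3)
       (0\<^sub>m m 1 * E1 + mat_adjoint Q3 * 0\<^sub>m m 1) (0\<^sub>m m 1 * 0\<^sub>m 1 m + mat_adjoint Q3 * A3)"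
      unfolding adjB A'blk by (rule mult_four_block_mat[of _ 1 1 _ m _ m _ _ 1 _ m]) (use A3c aQ3 E1c in simp_all)
    also have "\<dots> = four_block_mat E1 (0\<^sub>m 1 m) (0\<^sub>m m 1) (mat_adjoint Q3 * A3)"
      using A3c aQ3 E1c by (simp add: left_mult_zero_mat right_mult_zero_mat)
    finally have 1: "mat_adjoint B * A' = four_block_mat E1 (0\<^sub>m 1 m) (0\<^sub>m m 1) (mat_adjoint Q3 * A3)" .
    have QA: "mat_adjoint Q3 * A3 \<in> carrier_mat m m" using aQ3 A3c by simp
    have "mat_adjoint B * A' * B = four_block_mat (E1 * 1\<^sub>m 1 + 0\<^sub>m 1 m * 0\<^sub>m m 1) (E1 * 0\<^sub>m 1 m + 0\<^sub>m 1 m * Q3)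
       (0\<^sub>m m 1 * 1\<^sub>m 1 + (mat_adjoint Q3 * A3) * 0\<^sub>m m 1) (0\<^sub>m m 1 * 0\<^sub>m 1 m + (mat_adjoint Q3 * A3) * Q3)"
      unfolding 1 unfolding B_def by (rule mult_four_block_mat[of _ 1 1 _ m _ m _ _ 1 _ m]) (use QA Q3 E1c in simp_all)
    also have "\<dots> = D" unfolding D_def QAQ3[symmetric]
      using QA Q3 E1c by (simp add: left_mult_zero_mat right_mult_zero_mat)
    finally show ?thesis .
  qed
  have Dd: "diagonal_mat D" unfolding diagonal_mat_def
  proof (intro allI impI)
    fix i j assume i: "i < dim_row D" and j: "j < dim_col D" and ij: "i \<noteq> j"
    hence i': "i < ?n" and j': "j < ?n" using carrier_matD[OF Dc] by simp_all
    show "D $$ (i,j) = 0"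
    proof (cases "i = 0 \<or> j = 0")
      case True thus ?thesis unfolding D_def using i' j' ij carrier_matD[OF D3] carrier_matD[OF E1c] by (auto simp: E1_def)
    next
      case False
      hence "D $$ (i,j) = D3 $$ (i - 1, j - 1)" unfolding D_def using i' j' carrier_matD[OF D3] carrier_matD[OF E1c] by simp
      also have "\<dots> = 0" proof -
        have "i - 1 < m" "j - 1 < m" "i - 1 \<noteq> j - 1" using i' j' ij False by auto
        thus ?thesis using D3d carrier_matD[OF D3] unfolding diagonal_mat_def by simp
      qed
      finally show ?thesis .
    qed
  qed
  define Q where "Q = W * B"
  have Qc: "Q \<in> carrier_mat ?n ?n" unfolding Q_def using mult_carrier_mat[OF W Bc] .
  have adjQ: "mat_adjoint Q = mat_adjoint B * mat_adjoint W" unfolding Q_def by (rule adj_mult[OF W Bc])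
  have WB: "W * B \<in> carrier_mat ?n ?n" using Qc unfolding Q_def .
  have QQ: "mat_adjoint Q * Q = 1\<^sub>m ?n"
  proof -
    have "mat_adjoint Q * Q = mat_adjoint B * (mat_adjoint W * (W * B))"
      unfolding adjQ unfolding Q_def by (rule assoc_mult_mat[OF aB aW WB])
    also have "mat_adjoint W * (W * B) = (mat_adjoint W * W) * B" by (rule assoc_mult_mat[OF aW W Bc, symmetric])
    also have "\<dots> = B" unfolding WW using Bc by simp
    finally show ?thesis using BB by simp
  qed
  have QQ2: "Q * mat_adjoint Q = 1\<^sub>m ?n"
    by (rule mat_mult_left_right_inverse[OF _ Qc QQ]) (use Qc in simp)
  have QAQ: "mat_adjoint Q * A * Q = D"
  proof -
    have aWA: "mat_adjoint W * A \<in> carrier_mat ?n ?n" using mult_carrier_mat[OF aW A] .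
    have "mat_adjoint Q * A * Q = (mat_adjoint B * (mat_adjoint W * A)) * (W * B)"
      unfolding adjQ unfolding Q_def by (simp only: assoc_mult_mat[OF aB aW A])
    also have "\<dots> = mat_adjoint B * ((mat_adjoint W * A) * (W * B))" by (rule assoc_mult_mat[OF aB aWA WB])
    also have "(mat_adjoint W * A) * (W * B) = mat_adjoint W * (A * (W * B))" by (rule assoc_mult_mat[OF aW A WB])
    also have "A * (W * B) = (A * W) * B" by (rule assoc_mult_mat[OF A W Bc, symmetric])
    also have "mat_adjoint W * ((A * W) * B) = A' * B" unfolding A'_def by (rule assoc_mult_mat[OF aW AW Bc, symmetric])
    also have "mat_adjoint B * (A' * B) = mat_adjoint B * A' * B" by (rule assoc_mult_mat[OF aB A'c Bc, symmetric])
    finally show ?thesis using BAB by simp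
  qed
  show ?case using Qc QQ QQ2 Dc Dd QAQ by blast
qed


lemma real_core:
  fixes l d a b s m N :: real
  assumes l: "0 \<le> l" "l < 1" and d: "0 \<le> d" "d < 1"
    and ab: "0 \<le> a" "0 \<le> b" and s: "0 \<le> s" "s^2 = a^2 + b^2"
    and m: "0 \<le> m" "m \<le> d * a + l * b" "m^2 \<le> a^2 + l^2 * b^2"
    and N: "0 \<le> N" "N^2 \<le> l^2 * s^2 + (1 - l^2) * m^2"
  shows "N \<le> (1 - (1 - l^2)^2 * (1 - d)^2 / 8) * s"
proof -
  define e where "e = (1 - d) / 2"
  have e: "0 < e" "e \<le> 1/2" using d unfolding e_def by auto
  have l2: "0 \<le> l^2" "l^2 < 1" using l by (auto simp: power_less_one_iff abs_square_less_1)
  have as: "a \<le> s" using s ab by (metis abs_le_square_iff abs_of_nonneg le_add_same_cancel1 zero_le_power2)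
  have bs: "b \<le> s" using s ab by (metis abs_le_square_iff abs_of_nonneg le_add_same_cancel2 zero_le_power2)
  have mM: "m^2 \<le> (1 - (1 - l^2) * e^2) * s^2"
  proof (cases "b \<le> e * s")
    case True
    have "m \<le> d * s + l * (e * s)"
      using m(2) mult_left_mono[OF as d(1)] mult_left_mono[OF True l(1)] by linarith
    also have "\<dots> \<le> d * s + e * s" using l e s True
      by (simp add: mult_right_mono mult_le_cancel_right1 mult.assoc[symmetric])
    also have "\<dots> = (1 + d) / 2 * s" unfolding e_def by (simp add: field_simps)
    finally have "m \<le> (1 + d) / 2 * s" .
    hence "m^2 \<le> ((1 + d) / 2 * s)^2" using m(1) by (simp add: power_mono)
    also have "\<dots> = ((1 + d) / 2)^2 * s^2" by (simp add: power2_eq_square field_simps)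
    also have "((1 + d) / 2)^2 \<le> 1 - (1 - l^2) * e^2"
    proof -
      have "(1 - l^2) * e^2 \<le> e^2" using l2 by (simp add: algebra_simps)
      moreover have "((1 + d) / 2)^2 + e^2 \<le> 1"
      proof -
        have "((1 + d) / 2)^2 + e^2 = (1 + d^2) / 2" unfolding e_def by (simp add: power2_eq_square field_simps)
        moreover have "d^2 \<le> 1" using d by (simp add: abs_square_le_1)
        ultimately show ?thesis by simp
      qed
      ultimately show ?thesis by linarith
    qed
    hence "((1 + d) / 2)^2 * s^2 \<le> (1 - (1 - l^2) * e^2) * s^2" by (simp add: mult_right_mono)
    finally show ?thesis .
  next
    case False
    hence "(e * s)^2 \<le> b^2" using e s by (simp add: power_mono)
    hence "(1 - l^2) * (e * s)^2 \<le> (1 - l^2) * b^2" using l2 by (simp add: mult_left_mono)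
    thus ?thesis using m(3) s(2) by (simp add: power_mult_distrib algebra_simps)
  qed
  define x where "x = (1 - l^2)^2 * e^2"
  have x: "0 \<le> x" "x \<le> 1"
  proof -
    have h: "0 \<le> 1 - l^2" "1 - l^2 \<le> 1" using l2 by auto
    have "(1 - l^2)^2 \<le> 1" by (rule power_le_one[OF h])
    moreover have "e^2 \<le> 1" using e by (intro power_le_one) auto
    ultimately show "x \<le> 1" unfolding x_def by (intro mult_le_one) auto
    show "0 \<le> x" unfolding x_def by simp
  qed
  have "N^2 \<le> l^2 * s^2 + (1 - l^2) * ((1 - (1 - l^2) * e^2) * s^2)"
    using N(2) mult_left_mono[OF mM, of "1 - l^2"] l2 by linarith
  also have "\<dots> = (1 - x) * s^2" unfolding x_def by (simp add: power2_eq_square algebra_simps)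
  also have "\<dots> \<le> (1 - x / 2)^2 * s^2"
  proof (rule mult_right_mono)
    have "(1 - x / 2)^2 = 1 - x + x^2/4" by (simp add: power2_eq_square field_simps)
    thus "1 - x \<le> (1 - x / 2)^2" by simp
  qed simp
  also have "\<dots> = ((1 - x/2) * s)^2" by (simp add: power_mult_distrib)
  finally have sq: "N^2 \<le> ((1 - x/2) * s)^2" .
  have "0 \<le> (1 - x/2) * s" using x s by simp
  hence "N \<le> (1 - x/2) * s" by (rule power2_le_imp_le[OF sq])
  moreover have "x / 2 = (1 - l^2)^2 * (1 - d)^2 / 8" unfolding x_def e_def by (simp add: power_divide)
  ultimately show ?thesis by simp
qed


definition prj :: "complex mat \<Rightarrow> complex vec \<Rightarrow> complex vec" where
  "prj D y = vec (dim_row D) (\<lambda>i. if D $$ (i,i) = 1 then y $ i else 0)"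

lemma vnorm_L2: "vnorm v = L2_set (\<lambda>i. cmod (v $ i)) {..<dim_vec v}"
  unfolding vnorm_def L2_set_def ..

lemma vnorm_triangle: assumes "x \<in> carrier_vec n" "y \<in> carrier_vec n"
  shows "vnorm (x + y) \<le> vnorm x + vnorm (y :: complex vec)"
proof -
  have "vnorm (x + y) = L2_set (\<lambda>i. cmod (x $ i + y $ i)) {..<n}"
    unfolding vnorm_L2 using assms by (intro L2_set_cong) auto
  also have "\<dots> \<le> L2_set (\<lambda>i. cmod (x $ i) + cmod (y $ i)) {..<n}"
    by (intro L2_set_mono norm_triangle_ineq) auto
  also have "\<dots> \<le> L2_set (\<lambda>i. cmod (x $ i)) {..<n} + L2_set (\<lambda>i. cmod (y $ i)) {..<n}"
    by (rule L2_set_triangle_ineq)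
  also have "\<dots> = vnorm x + vnorm y" unfolding vnorm_L2 using assms by simp
  finally show ?thesis .
qed

lemma vnorm_sq_vec: "vnorm (vec n f) ^ 2 = (\<Sum>i<n. (cmod (f i))^2)"
  unfolding vnorm_sq by simp

lemma vnorm_sq': "v \<in> carrier_vec n \<Longrightarrow> vnorm v ^ 2 = (\<Sum>i<n. (cmod (v $ i))^2)"
  unfolding vnorm_sq by auto

lemma vnorm_le_sq: "vnorm x ^ 2 \<le> vnorm y ^ 2 \<Longrightarrow> vnorm x \<le> vnorm y"
  using power2_le_imp_le vnorm_nonneg by blast

context
  fixes n :: nat and D :: "complex mat"
  assumes Dc: "D \<in> carrier_mat n n" and Dd: "diagonal_mat D"
begin

lemma Dvec: assumes y: "y \<in> carrier_vec n"
  shows "D *\<^sub>v y = vec n (\<lambda>i. D $$ (i,i) * y $ i)"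
proof (rule eq_vecI)
  fix i assume "i < dim_vec (vec n (\<lambda>i. D $$ (i,i) * y $ i))"
  hence i: "i < n" by simp
  have "(D *\<^sub>v y) $ i = (\<Sum>j<n. D $$ (i,j) * y $ j)"
    using Dc y i by (simp add: scalar_prod_def lessThan_atLeast0)
  also have "\<dots> = (\<Sum>j<n. if j = i then D $$ (i,i) * y $ i else 0)"
    using Dd Dc i unfolding diagonal_mat_def by (intro sum.cong) auto
  also have "\<dots> = D $$ (i,i) * y $ i" using i by simp
  finally show "(D *\<^sub>v y) $ i = vec n (\<lambda>i. D $$ (i,i) * y $ i) $ i" using i by simp
qed (use Dc in simp)

lemma prj_carrier[simp]: "prj D y \<in> carrier_vec n"
  unfolding prj_def using Dc by simp

lemma prj_dim[simp]: "dim_vec (prj D y) = n"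
  unfolding prj_def using Dc by simp

lemma prj_index: "i < n \<Longrightarrow> prj D y $ i = (if D $$ (i,i) = 1 then y $ i else 0)"
  unfolding prj_def using Dc by simp

lemma prj_add: assumes "x \<in> carrier_vec n" "y \<in> carrier_vec n"
  shows "prj D (x + y) = prj D x + prj D y"
  by (rule eq_vecI) (use assms in \<open>auto simp: prj_index\<close>)

lemma prj_D: assumes "y \<in> carrier_vec n" shows "prj D (D *\<^sub>v y) = prj D y"
  by (rule eq_vecI) (use assms in \<open>auto simp: prj_index Dvec\<close>)

lemma vnorm_split: assumes y: "y \<in> carrier_vec n"
  shows "vnorm y ^ 2 = vnorm (prj D y) ^ 2 + vnorm (y - prj D y) ^ 2"
proof -
  have "vnorm y ^ 2 = (\<Sum>i<n. (cmod (y $ i))^2)" using vnorm_sq'[OF y] .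
  also have "\<dots> = (\<Sum>i<n. (cmod (prj D y $ i))^2 + (cmod ((y - prj D y) $ i))^2)"
    using y by (intro sum.cong) (auto simp: prj_index)
  also have "\<dots> = vnorm (prj D y) ^ 2 + vnorm (y - prj D y) ^ 2"
    using y by (simp add: sum.distrib vnorm_sq'[of _ n])
  finally show ?thesis .
qed

lemma vnorm_prj_le: assumes "y \<in> carrier_vec n" shows "vnorm (prj D y) \<le> vnorm y"
  by (rule vnorm_le_sq) (use vnorm_split[OF assms] in simp)

context
  fixes l :: real
  assumes l: "0 \<le> l" "l \<le> 1" and ev: "\<And>i. i < n \<Longrightarrow> D $$ (i,i) \<noteq> 1 \<Longrightarrow> cmod (D $$ (i,i)) \<le> l"
begin

lemma D_rest: assumes y: "y \<in> carrier_vec n"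
  shows "vnorm (D *\<^sub>v y - prj D (D *\<^sub>v y)) \<le> l * vnorm (y - prj D y)"
proof -
  have Dy: "D *\<^sub>v y \<in> carrier_vec n" using Dc y by simp
  have "vnorm (D *\<^sub>v y - prj D (D *\<^sub>v y)) ^ 2 = (\<Sum>i<n. (cmod ((D *\<^sub>v y - prj D (D *\<^sub>v y)) $ i))^2)"
    using Dy by (intro vnorm_sq') simp
  also have "\<dots> \<le> (\<Sum>i<n. l^2 * (cmod ((y - prj D y) $ i))^2)"
  proof (intro sum_mono)
    fix i assume "i \<in> {..<n}"
    hence i: "i < n" by simp
    show "(cmod ((D *\<^sub>v y - prj D (D *\<^sub>v y)) $ i))^2 \<le> l^2 * (cmod ((y - prj D y) $ i))^2"
    proof (cases "D $$ (i,i) = 1")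
      case True thus ?thesis using i y Dy by (simp add: prj_index)
    next
      case False
      have "(cmod ((D *\<^sub>v y - prj D (D *\<^sub>v y)) $ i))^2 = (cmod (D $$ (i,i)))^2 * (cmod (y $ i))^2"
        using False i y Dy by (simp add: prj_index Dvec norm_mult power_mult_distrib)
      also have "\<dots> \<le> l^2 * (cmod (y $ i))^2"
        using ev[OF i False] by (intro mult_right_mono power_mono) auto
      finally show ?thesis using False i y by (simp add: prj_index)
    qed
  qed
  also have "\<dots> = (l * vnorm (y - prj D y))^2"
    using y by (simp add: vnorm_sq'[of _ n] power_mult_distrib sum_distrib_left)
  finally have sq: "vnorm (D *\<^sub>v y - prj D (D *\<^sub>v y)) ^ 2 \<le> (l * vnorm (y - prj D y))^2" .
  have "0 \<le> l * vnorm (y - prj D y)" using l by simp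
  thus ?thesis by (rule power2_le_imp_le[OF sq])
qed

lemma D_sq: assumes y: "y \<in> carrier_vec n"
  shows "vnorm (D *\<^sub>v y) ^ 2 \<le> l^2 * vnorm y ^ 2 + (1 - l^2) * vnorm (prj D y) ^ 2"
proof -
  have "vnorm (D *\<^sub>v y) ^ 2 = (\<Sum>i<n. (cmod (D $$ (i,i)))^2 * (cmod (y $ i))^2)"
    using y by (simp add: Dvec vnorm_sq_vec norm_mult power_mult_distrib)
  also have "\<dots> \<le> (\<Sum>i<n. l^2 * (cmod (y $ i))^2 + (1 - l^2) * (cmod (prj D y $ i))^2)"
  proof (intro sum_mono)
    fix i assume "i \<in> {..<n}"
    hence i: "i < n" by simp
    show "(cmod (D $$ (i,i)))^2 * (cmod (y $ i))^2 \<le> l^2 * (cmod (y $ i))^2 + (1 - l^2) * (cmod (prj D y $ i))^2"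
    proof (cases "D $$ (i,i) = 1")
      case True thus ?thesis using i by (simp add: prj_index algebra_simps)
    next
      case False
      have "(cmod (D $$ (i,i)))^2 * (cmod (y $ i))^2 \<le> l^2 * (cmod (y $ i))^2"
        using ev[OF i False] by (intro mult_right_mono power_mono) auto
      thus ?thesis using False i by (simp add: prj_index)
    qed
  qed
  also have "\<dots> = l^2 * vnorm y ^ 2 + (1 - l^2) * vnorm (prj D y) ^ 2"
    using y by (simp add: vnorm_sq'[of _ n] sum.distrib sum_distrib_left)
  finally show ?thesis .
qed

lemma D_contr: assumes y: "y \<in> carrier_vec n" shows "vnorm (D *\<^sub>v y) \<le> vnorm y"
proof (rule vnorm_le_sq)
  have "vnorm (prj D y) ^ 2 \<le> vnorm y ^ 2" using vnorm_prj_le[OF y] by (simp add: power_mono)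
  moreover have "0 \<le> 1 - l^2" using power_le_one[OF l] by simp
  ultimately have "(1 - l^2) * vnorm (prj D y) ^ 2 \<le> (1 - l^2) * vnorm y ^ 2"
    by (rule mult_left_mono)
  moreover have "l^2 * vnorm y ^ 2 + (1 - l^2) * vnorm y ^ 2 = vnorm y ^ 2" by (simp add: algebra_simps)
  ultimately show "vnorm (D *\<^sub>v y) ^ 2 \<le> vnorm y ^ 2" using D_sq[OF y] by linarith
qed

end
end


lemma cinner_unit: assumes "a \<in> carrier_vec n" "i < n"
  shows "a \<bullet>c unit_vec n i = (a $ i :: complex)"
proof -
  have "a \<bullet>c unit_vec n i = (\<Sum>j<n. if j = i then a $ i else 0)"
    unfolding cinner_def using assms by (intro sum.cong) auto
  also have "\<dots> = a $ i" using assms by simp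
  finally show ?thesis .
qed

context
  fixes n :: nat and Q D A :: "complex mat"
  assumes Qc: "Q \<in> carrier_mat n n" and QQ: "mat_adjoint Q * Q = 1\<^sub>m n"
    and QQ2: "Q * mat_adjoint Q = 1\<^sub>m n"
    and Dc: "D \<in> carrier_mat n n" and Dd: "diagonal_mat D"
    and Ac: "A \<in> carrier_mat n n" and QAQ: "mat_adjoint Q * A * Q = D"
begin

lemma aQ: "mat_adjoint Q \<in> carrier_mat n n" using Qc by simp

lemmas pd[simp] = prj_dim[OF Dc Dd]

lemma QadjQ_vec: "x \<in> carrier_vec n \<Longrightarrow> Q *\<^sub>v (mat_adjoint Q *\<^sub>v x) = x"
  using assoc_mult_mat_vec[OF Qc aQ, of x, symmetric] QQ2 by simp

lemma adjQQ_vec: "y \<in> carrier_vec n \<Longrightarrow> mat_adjoint Q *\<^sub>v (Q *\<^sub>v y) = y"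
  using assoc_mult_mat_vec[OF aQ Qc, of y, symmetric] QQ by simp

lemma AQ: "A * Q = Q * D"
proof -
  have "A * Q = (Q * mat_adjoint Q) * (A * Q)" unfolding QQ2 using Ac Qc by simp
  also have "\<dots> = Q * (mat_adjoint Q * (A * Q))"
    by (rule assoc_mult_mat[OF Qc aQ mult_carrier_mat[OF Ac Qc]])
  also have "mat_adjoint Q * (A * Q) = D" using QAQ assoc_mult_mat[OF aQ Ac Qc] by simp
  finally show ?thesis .
qed

lemma Avec: "y \<in> carrier_vec n \<Longrightarrow> A *\<^sub>v (Q *\<^sub>v y) = Q *\<^sub>v (D *\<^sub>v y)"
  using assoc_mult_mat_vec[OF Ac Qc, of y, symmetric] assoc_mult_mat_vec[OF Qc Dc, of y] AQ by simp

lemma Acoord: "x \<in> carrier_vec n \<Longrightarrow> mat_adjoint Q *\<^sub>v (A *\<^sub>v x) = D *\<^sub>v (mat_adjoint Q *\<^sub>v x)"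
proof -
  assume x: "x \<in> carrier_vec n"
  have y: "mat_adjoint Q *\<^sub>v x \<in> carrier_vec n" using aQ x by simp
  have "A *\<^sub>v x = A *\<^sub>v (Q *\<^sub>v (mat_adjoint Q *\<^sub>v x))" using QadjQ_vec[OF x] by simp
  also have "\<dots> = Q *\<^sub>v (D *\<^sub>v (mat_adjoint Q *\<^sub>v x))" by (rule Avec[OF y])
  finally show ?thesis using adjQQ_vec Dc y by simp
qed

lemma vnorm_Q: "y \<in> carrier_vec n \<Longrightarrow> vnorm (Q *\<^sub>v y) = vnorm y"
  by (rule unitary_vnorm[OF Qc QQ])

lemma vnorm_adjQ: "x \<in> carrier_vec n \<Longrightarrow> vnorm (mat_adjoint Q *\<^sub>v x) = vnorm x"
  by (rule unitary_vnorm[OF aQ]) (use QQ2 in simp)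

lemma eig_diag: assumes i: "i < n" shows "eigenvalue A (D $$ (i,i))"
proof -
  let ?v = "Q *\<^sub>v unit_vec n i"
  have vc: "?v \<in> carrier_vec n" using Qc by simp
  have "?v \<noteq> 0\<^sub>v n"
  proof
    assume "?v = 0\<^sub>v n"
    hence "mat_adjoint Q *\<^sub>v ?v = mat_adjoint Q *\<^sub>v 0\<^sub>v n" by simp
    also have "\<dots> = 0\<^sub>v n" by (rule eq_vecI) (use carrier_matD[OF Qc] in \<open>simp_all add: scalar_prod_def\<close>)
    finally have "mat_adjoint Q *\<^sub>v ?v = 0\<^sub>v n" .
    hence "unit_vec n i = (0\<^sub>v n :: complex vec)" using adjQQ_vec[of "unit_vec n i"] by simp
    hence "unit_vec n i $ i = (0\<^sub>v n :: complex vec) $ i" by simp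
    thus False using i by simp
  qed
  moreover have "D *\<^sub>v unit_vec n i = D $$ (i,i) \<cdot>\<^sub>v unit_vec n i"
    by (rule eq_vecI) (use i in \<open>auto simp: Dvec[OF Dc Dd]\<close>)
  hence "A *\<^sub>v ?v = D $$ (i,i) \<cdot>\<^sub>v ?v" using Avec[of "unit_vec n i"] mult_mat_vec[OF Qc] by simp
  ultimately show ?thesis unfolding eigenvalue_def eigenvector_def using vc Ac by auto
qed

lemma E_char: assumes x: "x \<in> carrier_vec n"
  shows "x \<in> eigenspace A 1 \<longleftrightarrow> (\<forall>i<n. D $$ (i,i) \<noteq> 1 \<longrightarrow> (mat_adjoint Q *\<^sub>v x) $ i = 0)"
proof -
  define y where "y = mat_adjoint Q *\<^sub>v x"
  have y: "y \<in> carrier_vec n" unfolding y_def using aQ x by simp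
  have xy: "x = Q *\<^sub>v y" unfolding y_def using QadjQ_vec[OF x] by simp
  have "x \<in> eigenspace A 1 \<longleftrightarrow> A *\<^sub>v x = x" unfolding eigenspace_def using x Ac by auto
  also have "\<dots> \<longleftrightarrow> D *\<^sub>v y = y"
  proof
    assume "A *\<^sub>v x = x"
    thus "D *\<^sub>v y = y" using Acoord[OF x] unfolding y_def by simp
  next
    assume "D *\<^sub>v y = y"
    thus "A *\<^sub>v x = x" unfolding xy using Avec[OF y] by simp
  qed
  also have "\<dots> \<longleftrightarrow> (\<forall>i<n. D $$ (i,i) * y $ i = y $ i)"
  proof
    assume "D *\<^sub>v y = y"
    hence "\<And>i. i < n \<Longrightarrow> (D *\<^sub>v y) $ i = y $ i" by simp
    thus "\<forall>i<n. D $$ (i,i) * y $ i = y $ i" using Dvec[OF Dc Dd y] by simp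
  next
    assume "\<forall>i<n. D $$ (i,i) * y $ i = y $ i"
    thus "D *\<^sub>v y = y" using Dvec[OF Dc Dd y] y by (intro eq_vecI) auto
  qed
  also have "\<dots> \<longleftrightarrow> (\<forall>i<n. D $$ (i,i) \<noteq> 1 \<longrightarrow> y $ i = 0)"
  proof -
    have "\<And>i. D $$ (i,i) * y $ i = y $ i \<longleftrightarrow> (D $$ (i,i) \<noteq> 1 \<longrightarrow> y $ i = 0)"
      by (metis mult_cancel_right2 mult_eq_0_iff) 
    thus ?thesis by simp
  qed
  finally show ?thesis unfolding y_def .
qed

lemma OP: assumes x: "x \<in> carrier_vec n"
  shows "orth_proj (eigenspace A 1) x = Q *\<^sub>v prj D (mat_adjoint Q *\<^sub>v x)"
proof -
  define y where "y = mat_adjoint Q *\<^sub>v x"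
  have y: "y \<in> carrier_vec n" unfolding y_def using aQ x by simp
  have xy: "x = Q *\<^sub>v y" unfolding y_def using QadjQ_vec[OF x] by simp
  let ?E = "eigenspace A 1"
  let ?p = "Q *\<^sub>v prj D y"
  have pc: "prj D y \<in> carrier_vec n" using prj_carrier[OF Dc Dd] .
  have p1: "?p \<in> ?E" using E_char[of ?p] Qc pc adjQQ_vec[OF pc] by (simp add: prj_index[OF Dc Dd])
  have p2: "(x - ?p) \<bullet>c w = 0" if w: "w \<in> ?E" for w
  proof -
    have wc: "w \<in> carrier_vec n" using w Ac unfolding eigenspace_def by auto
    define z where "z = mat_adjoint Q *\<^sub>v w"
    have z: "z \<in> carrier_vec n" unfolding z_def using aQ wc by simp
    have wz: "w = Q *\<^sub>v z" unfolding z_def using QadjQ_vec[OF wc] by simp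
    have z0: "\<And>i. i < n \<Longrightarrow> D $$ (i,i) \<noteq> 1 \<Longrightarrow> z $ i = 0" using E_char[OF wc] w unfolding z_def by auto
    have "x - ?p = Q *\<^sub>v (y - prj D y)" unfolding xy using mult_minus_distrib_mat_vec[OF Qc y pc] by simp
    hence "(x - ?p) \<bullet>c w = (y - prj D y) \<bullet>c z" unfolding wz
      using unitary_inner[OF Qc QQ _ z, of "y - prj D y"] y pc by simp
    also have "\<dots> = (\<Sum>i<n. (y - prj D y) $ i * cnj (z $ i))" unfolding cinner_def using z by simp
    also have "\<dots> = 0"
    proof (intro sum.neutral ballI)
      fix i assume "i \<in> {..<n}"
      hence i: "i < n" by simp
      show "(y - prj D y) $ i * cnj (z $ i) = 0"
      proof (cases "D $$ (i,i) = 1")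
        case True thus ?thesis using i y by (simp add: prj_index[OF Dc Dd])
      next
        case False thus ?thesis using z0[OF i] by simp
      qed
    qed
    finally show ?thesis .
  qed
  have p3: "p = ?p" if p: "p \<in> ?E" and po: "\<forall>w\<in>?E. (x - p) \<bullet>c w = 0" for p
  proof -
    have pc': "p \<in> carrier_vec n" using p Ac unfolding eigenspace_def by auto
    define z where "z = mat_adjoint Q *\<^sub>v p"
    have z: "z \<in> carrier_vec n" unfolding z_def using aQ pc' by simp
    have pz: "p = Q *\<^sub>v z" unfolding z_def using QadjQ_vec[OF pc'] by simp
    have z0: "\<And>i. i < n \<Longrightarrow> D $$ (i,i) \<noteq> 1 \<Longrightarrow> z $ i = 0" using E_char[OF pc'] p unfolding z_def by auto
    have z1: "z $ i = y $ i" if i: "i < n" and di: "D $$ (i,i) = 1" for i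
    proof -
      let ?w = "Q *\<^sub>v unit_vec n i"
      have "?w \<in> ?E" using E_char[of ?w] Qc adjQQ_vec[of "unit_vec n i"] i di by auto
      hence "(x - p) \<bullet>c ?w = 0" using po by blast
      moreover have "x - p = Q *\<^sub>v (y - z)" unfolding xy pz using mult_minus_distrib_mat_vec[OF Qc y z] by simp
      ultimately have "(y - z) \<bullet>c unit_vec n i = 0"
        using unitary_inner[OF Qc QQ _ unit_vec_carrier, of "y - z"] y z by simp
      hence "(y - z) $ i = 0" using cinner_unit[of "y - z" n i] y z i by simp
      thus ?thesis using i y z by simp
    qed
    have "z = prj D y"
      by (rule eq_vecI) (use z z0 z1 in \<open>auto simp: prj_index[OF Dc Dd]\<close>)
    thus ?thesis unfolding pz by simp
  qed
  show ?thesis unfolding orth_proj_def y_def[symmetric]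
  proof (rule the_equality)
    show "?p \<in> ?E \<and> (\<forall>w\<in>?E. (x - ?p) \<bullet>c w = 0)" using p1 p2 by blast
  next
    fix p assume "p \<in> ?E \<and> (\<forall>w\<in>?E. (x - p) \<bullet>c w = 0)"
    thus "p = ?p" using p3 by blast
  qed
qed

end


context
  fixes n :: nat and Q D A U :: "complex mat" and l c :: real
  assumes Qc: "Q \<in> carrier_mat n n" and QQ: "mat_adjoint Q * Q = 1\<^sub>m n"
    and QQ2: "Q * mat_adjoint Q = 1\<^sub>m n"
    and Dc: "D \<in> carrier_mat n n" and Dd: "diagonal_mat D"
    and Ac: "A \<in> carrier_mat n n" and QAQ: "mat_adjoint Q * A * Q = D"
    and Uc: "U \<in> carrier_mat n n" and UU: "mat_adjoint U * U = 1\<^sub>m n"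
    and l: "0 \<le> l" "l < 1" and c: "0 \<le> c" "c < 1"
    and ev: "\<And>i. i < n \<Longrightarrow> D $$ (i,i) \<noteq> 1 \<Longrightarrow> cmod (D $$ (i,i)) \<le> l"
    and hyp: "\<forall>v \<in> eigenspace A 1. vnorm (orth_proj (eigenspace A 1) (U *\<^sub>v v)) \<le> c * vnorm v"
begin

lemmas aQ' = adj_carrier[OF Qc]
lemmas pd'[simp] = prj_dim[OF Dc Dd]
lemmas QadjQ' = QadjQ_vec[OF Qc QQ QQ2 Dc Dd Ac QAQ]
lemmas adjQQ' = adjQQ_vec[OF Qc QQ QQ2 Dc Dd Ac QAQ]
lemmas Acoord' = Acoord[OF Qc QQ QQ2 Dc Dd Ac QAQ]
lemmas vnorm_Q' = vnorm_Q[OF Qc QQ QQ2 Dc Dd Ac QAQ]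
lemmas vnorm_adjQ' = vnorm_adjQ[OF Qc QQ QQ2 Dc Dd Ac QAQ]
lemmas E_char' = E_char[OF Qc QQ QQ2 Dc Dd Ac QAQ]
lemmas OP' = OP[OF Qc QQ QQ2 Dc Dd Ac QAQ]
lemma D_contr': assumes "y \<in> carrier_vec n" shows "vnorm (D *\<^sub>v y) \<le> vnorm y"
  using D_contr[OF Dc Dd l(1) less_imp_le[OF l(2)] _ assms] ev by blast
lemma D_sq': assumes "y \<in> carrier_vec n"
  shows "vnorm (D *\<^sub>v y) ^ 2 \<le> l^2 * vnorm y ^ 2 + (1 - l^2) * vnorm (prj D y) ^ 2"
  using D_sq[OF Dc Dd l(1) less_imp_le[OF l(2)] _ assms] ev by blast
lemma D_rest': assumes "y \<in> carrier_vec n"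
  shows "vnorm (D *\<^sub>v y - prj D (D *\<^sub>v y)) \<le> l * vnorm (y - prj D y)"
  using D_rest[OF Dc Dd l(1) less_imp_le[OF l(2)] _ assms] ev by blast
lemmas vnorm_U = unitary_vnorm[OF Uc UU]

lemma T1: assumes x: "x \<in> carrier_vec n" shows "vnorm (U *\<^sub>v (A *\<^sub>v x)) \<le> vnorm x"
proof -
  have Ax: "A *\<^sub>v x \<in> carrier_vec n" using Ac x by simp
  have y: "mat_adjoint Q *\<^sub>v x \<in> carrier_vec n" using aQ' x by simp
  have "vnorm (U *\<^sub>v (A *\<^sub>v x)) = vnorm (A *\<^sub>v x)" using vnorm_U[OF Ax] .
  also have "\<dots> = vnorm (mat_adjoint Q *\<^sub>v (A *\<^sub>v x))" using vnorm_adjQ'[OF Ax] by simp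
  also have "\<dots> = vnorm (D *\<^sub>v (mat_adjoint Q *\<^sub>v x))" using Acoord'[OF x] by simp
  also have "\<dots> \<le> vnorm (mat_adjoint Q *\<^sub>v x)" by (rule D_contr'[OF y])
  also have "\<dots> = vnorm x" using vnorm_adjQ'[OF x] .
  finally show ?thesis .
qed

lemma T2: assumes x: "x \<in> carrier_vec n"
  shows "vnorm (U *\<^sub>v (A *\<^sub>v (U *\<^sub>v (A *\<^sub>v x)))) \<le> (1 - (1 - l^2)^2 * (1 - c)^2 / 8) * vnorm x"
proof -
  define y where "y = mat_adjoint Q *\<^sub>v x"
  have y: "y \<in> carrier_vec n" unfolding y_def using aQ' x by simp
  define z where "z = D *\<^sub>v y"
  have z: "z \<in> carrier_vec n" unfolding z_def using Dc y by simp
  define w where "w = A *\<^sub>v x"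
  have wc: "w \<in> carrier_vec n" unfolding w_def using Ac x by simp
  have wz: "w = Q *\<^sub>v z"
  proof -
    have "mat_adjoint Q *\<^sub>v w = z" unfolding w_def z_def y_def using Acoord'[OF x] .
    thus ?thesis using QadjQ'[OF wc] by simp
  qed
  define pz where "pz = prj D z"
  define rz where "rz = z - pz"
  have pz: "pz \<in> carrier_vec n" unfolding pz_def using prj_carrier[OF Dc Dd] .
  have rz: "rz \<in> carrier_vec n" unfolding rz_def using z pz by simp
  have zsplit: "z = pz + rz" unfolding rz_def by (rule eq_vecI) (use z pz in auto)
  define w1 where "w1 = Q *\<^sub>v pz"
  define w2 where "w2 = Q *\<^sub>v rz"
  have w1: "w1 \<in> carrier_vec n" unfolding w1_def using Qc pz by simp
  have w2: "w2 \<in> carrier_vec n" unfolding w2_def using Qc rz by simp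
  have w12: "w = w1 + w2" unfolding wz w1_def w2_def zsplit by (rule mult_add_distrib_mat_vec[OF Qc pz rz])
  have Uw1: "U *\<^sub>v w1 \<in> carrier_vec n" using Uc w1 by simp
  have Uw2: "U *\<^sub>v w2 \<in> carrier_vec n" using Uc w2 by simp
  have Uw: "U *\<^sub>v w \<in> carrier_vec n" using Uc wc by simp
  define u1 where "u1 = mat_adjoint Q *\<^sub>v (U *\<^sub>v w1)"
  define u2 where "u2 = mat_adjoint Q *\<^sub>v (U *\<^sub>v w2)"
  define u where "u = mat_adjoint Q *\<^sub>v (U *\<^sub>v w)"
  have u1: "u1 \<in> carrier_vec n" unfolding u1_def using aQ' Uw1 by simp
  have u2: "u2 \<in> carrier_vec n" unfolding u2_def using aQ' Uw2 by simp
  have u: "u \<in> carrier_vec n" unfolding u_def using aQ' Uw by simp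
  have u12: "u = u1 + u2" unfolding u_def u1_def u2_def w12
    using mult_add_distrib_mat_vec[OF Uc w1 w2] mult_add_distrib_mat_vec[OF aQ' Uw1 Uw2] by simp
  define a where "a = vnorm (prj D y)"
  define b where "b = vnorm (y - prj D y)"
  define s where "s = vnorm x"
  define m where "m = vnorm (prj D u)"
  define N where "N = vnorm (U *\<^sub>v (A *\<^sub>v (U *\<^sub>v (A *\<^sub>v x))))"
  have pzy: "pz = prj D y" unfolding pz_def z_def by (rule prj_D[OF Dc Dd y])
  have sy: "s = vnorm y" unfolding s_def y_def using vnorm_adjQ'[OF x] by simp
  have AUw: "A *\<^sub>v (U *\<^sub>v w) \<in> carrier_vec n" using Ac Uw by simp
  have N_eq: "N = vnorm (D *\<^sub>v u)"
  proof -
    have "N = vnorm (A *\<^sub>v (U *\<^sub>v w))" unfolding N_def w_def[symmetric] using vnorm_U[OF AUw] .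
    also have "\<dots> = vnorm (mat_adjoint Q *\<^sub>v (A *\<^sub>v (U *\<^sub>v w)))" using vnorm_adjQ'[OF AUw] by simp
    also have "\<dots> = vnorm (D *\<^sub>v u)" unfolding u_def using Acoord'[OF Uw] by simp
    finally show ?thesis .
  qed
  have vu: "vnorm u = vnorm z"
  proof -
    have "vnorm u = vnorm (U *\<^sub>v w)" unfolding u_def using vnorm_adjQ'[OF Uw] .
    also have "\<dots> = vnorm w" using vnorm_U[OF wc] .
    also have "\<dots> = vnorm z" unfolding wz using vnorm_Q'[OF z] .
    finally show ?thesis .
  qed
  have hN: "N^2 \<le> l^2 * vnorm u ^ 2 + (1 - l^2) * m^2" unfolding N_eq m_def by (rule D_sq'[OF u])
  have w1E: "w1 \<in> eigenspace A 1"
    using E_char'[OF w1] adjQQ'[OF pz] unfolding w1_def pz_def by (simp add: prj_index[OF Dc Dd])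
  have m1: "vnorm (prj D u1) \<le> c * a"
  proof -
    have "vnorm (prj D u1) = vnorm (orth_proj (eigenspace A 1) (U *\<^sub>v w1))"
      unfolding OP'[OF Uw1] u1_def using vnorm_Q'[OF prj_carrier[OF Dc Dd]] by simp
    also have "\<dots> \<le> c * vnorm w1" using hyp w1E by blast
    also have "vnorm w1 = a" unfolding w1_def a_def using vnorm_Q'[OF pz] pzy by simp
    finally show ?thesis .
  qed
  have m2: "vnorm (prj D u2) \<le> l * b"
  proof -
    have "vnorm (prj D u2) \<le> vnorm u2" by (rule vnorm_prj_le[OF Dc Dd u2])
    also have "\<dots> = vnorm (U *\<^sub>v w2)" unfolding u2_def using vnorm_adjQ'[OF Uw2] .
    also have "\<dots> = vnorm w2" using vnorm_U[OF w2] .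
    also have "\<dots> = vnorm rz" unfolding w2_def using vnorm_Q'[OF rz] .
    also have "\<dots> \<le> l * b" unfolding rz_def pz_def z_def b_def by (rule D_rest'[OF y])
    finally show ?thesis .
  qed
  have mle: "m \<le> c * a + l * b"
  proof -
    have "m = vnorm (prj D u1 + prj D u2)" unfolding m_def u12 prj_add[OF Dc Dd u1 u2] ..
    also have "\<dots> \<le> vnorm (prj D u1) + vnorm (prj D u2)"
      by (rule vnorm_triangle) (use prj_carrier[OF Dc Dd] in auto)
    finally show ?thesis using m1 m2 by linarith
  qed
  have zsq: "vnorm z ^ 2 = a^2 + vnorm rz ^ 2"
    using vnorm_split[OF Dc Dd z] unfolding rz_def a_def pz_def[symmetric] pzy by simp
  have rzb: "vnorm rz \<le> l * b" unfolding rz_def pz_def z_def b_def by (rule D_rest'[OF y])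
  have "vnorm rz ^ 2 \<le> (l * b)^2" using rzb by (simp add: power_mono)
  hence zsq2: "vnorm z ^ 2 \<le> a^2 + l^2 * b^2" using zsq by (simp add: power_mult_distrib)
  have m_sq: "m^2 \<le> a^2 + l^2 * b^2"
  proof -
    have "m \<le> vnorm u" unfolding m_def by (rule vnorm_prj_le[OF Dc Dd u])
    hence "m^2 \<le> vnorm u ^ 2" unfolding m_def by (simp add: power_mono)
    thus ?thesis using vu zsq2 by simp
  qed
  have s_sq: "s^2 = a^2 + b^2" unfolding sy a_def b_def by (rule vnorm_split[OF Dc Dd y])
  have "vnorm z \<le> s" unfolding sy z_def by (rule D_contr'[OF y])
  hence "vnorm u ^ 2 \<le> s^2" unfolding vu by (simp add: power_mono)
  hence "l^2 * vnorm u ^ 2 \<le> l^2 * s^2" by (simp add: mult_left_mono)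
  hence hN2: "N^2 \<le> l^2 * s^2 + (1 - l^2) * m^2" using hN by linarith
  have "N \<le> (1 - (1 - l^2)^2 * (1 - c)^2 / 8) * s"
    by (rule real_core[OF l c _ _ _ s_sq _ mle m_sq _ hN2]) (auto simp: a_def b_def s_def m_def N_def)
  thus ?thesis unfolding N_def s_def .
qed

end


lemma pow_vec: assumes T: "T \<in> carrier_mat n n" and x: "x \<in> carrier_vec n"
  shows "(T ^\<^sub>m Suc k) *\<^sub>v x = (T ^\<^sub>m k) *\<^sub>v (T *\<^sub>v (x :: complex vec))"
  using assoc_mult_mat_vec[OF pow_carrier_mat[OF T, of k] T x] by simp

lemma pow0_vec: assumes T: "T \<in> carrier_mat n n" and x: "x \<in> carrier_vec n"
  shows "(T ^\<^sub>m 0) *\<^sub>v x = (x :: complex vec)"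
  using T x by simp

lemma pow_bound:
  assumes T: "T \<in> carrier_mat n n" and g0: "0 \<le> g"
    and T1: "\<And>x. x \<in> carrier_vec n \<Longrightarrow> vnorm (T *\<^sub>v x) \<le> vnorm x"
    and T2: "\<And>x. x \<in> carrier_vec n \<Longrightarrow> vnorm (T *\<^sub>v (T *\<^sub>v x)) \<le> g * vnorm x"
  shows "x \<in> carrier_vec n \<Longrightarrow> vnorm ((T ^\<^sub>m k) *\<^sub>v (x :: complex vec)) \<le> g ^ (k div 2) * vnorm x"
proof -
  have ev: "\<And>x. x \<in> carrier_vec n \<Longrightarrow> vnorm ((T ^\<^sub>m (2 * j)) *\<^sub>v x) \<le> g ^ j * vnorm x" for j
  proof (induction j)
    case 0 thus ?case using pow0_vec[OF T] by simp
  next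
    case (Suc j)
    have Tx: "T *\<^sub>v x \<in> carrier_vec n" and TTx: "T *\<^sub>v (T *\<^sub>v x) \<in> carrier_vec n" using T Suc.prems by auto
    have "(T ^\<^sub>m (2 * Suc j)) *\<^sub>v x = (T ^\<^sub>m (2 * j)) *\<^sub>v (T *\<^sub>v (T *\<^sub>v x))"
      using pow_vec[OF T Suc.prems, of "Suc (2 * j)"] pow_vec[OF T Tx, of "2 * j"] by simp
    hence "vnorm ((T ^\<^sub>m (2 * Suc j)) *\<^sub>v x) \<le> g ^ j * vnorm (T *\<^sub>v (T *\<^sub>v x))" using Suc.IH[OF TTx] by simp
    also have "\<dots> \<le> g ^ j * (g * vnorm x)" using T2[OF Suc.prems] g0 by (simp add: mult_left_mono)
    finally show ?case by (simp add: mult_ac)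
  qed
  assume x: "x \<in> carrier_vec n"
  show ?thesis
  proof (cases "even k")
    case True
    then obtain j where k: "k = 2 * j" by blast
    thus ?thesis using ev[OF x, of j] by simp
  next
    case False
    then obtain j where k: "k = Suc (2 * j)" by (metis oddE Suc_eq_plus1)
    have Tx: "T *\<^sub>v x \<in> carrier_vec n" using T x by auto
    have "vnorm ((T ^\<^sub>m k) *\<^sub>v x) = vnorm ((T ^\<^sub>m (2 * j)) *\<^sub>v (T *\<^sub>v x))" unfolding k using pow_vec[OF T x] by simp
    also have "\<dots> \<le> g ^ j * vnorm (T *\<^sub>v x)" using ev[OF Tx] .
    also have "\<dots> \<le> g ^ j * vnorm x" using T1[OF x] g0 by (simp add: mult_left_mono)
    finally show ?thesis unfolding k by simp
  qed
qed

lemma opnorm_bound: assumes M: "M \<in> carrier_mat n n" and b: "0 \<le> b"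
  and h: "\<And>x. x \<in> carrier_vec n \<Longrightarrow> vnorm (M *\<^sub>v x) \<le> b * vnorm x"
  shows "opnorm M \<le> b"
  unfolding opnorm_def
proof (rule cSup_least)
  show "{vnorm (M *\<^sub>v v) |v. v \<in> carrier_vec (dim_col M) \<and> vnorm v \<le> 1} \<noteq> {}"
  proof -
    have "0\<^sub>v n \<in> carrier_vec (dim_col M) \<and> vnorm (0\<^sub>v n :: complex vec) \<le> 1" using M by (simp add: vnorm_def)
    thus ?thesis by blast
  qed
next
  fix r assume "r \<in> {vnorm (M *\<^sub>v v) |v. v \<in> carrier_vec (dim_col M) \<and> vnorm v \<le> 1}"
  then obtain v where v: "v \<in> carrier_vec n" "vnorm v \<le> 1" and r: "r = vnorm (M *\<^sub>v v)" using M by auto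
  have "r \<le> b * vnorm v" using h[OF v(1)] r by simp
  also have "\<dots> \<le> b * 1" using v(2) b by (intro mult_left_mono) auto
  finally show "r \<le> b" by simp
qed

theorem mainTheorem9:
  fixes lam d :: real
  assumes "0 \<le> lam" "lam < 1" "0 \<le> d" "d < 1"
  shows "\<exists>g::real. g < 1 \<and>
    (\<forall>(n::nat) (U::complex mat) (A::complex mat).
       U \<in> carrier_mat n n \<longrightarrow> A \<in> carrier_mat n n \<longrightarrow>
       unitary_mat U \<longrightarrow> hermitian_mat A \<longrightarrow>
       eigenvalue A 1 \<longrightarrow>
       (\<forall>\<mu>. eigenvalue A \<mu> \<and> \<mu> \<noteq> 1 \<longrightarrow> cmod \<mu> \<le> lam) \<longrightarrow>
       (\<forall>v \<in> eigenspace A 1. vnorm (orth_proj (eigenspace A 1) (U *\<^sub>v v)) \<le> d * vnorm v) \<longrightarrow>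
       (\<forall>v \<in> carrier_vec n. vnorm (((U * A) ^\<^sub>m 2) *\<^sub>v v) \<le> g * vnorm v) \<and>
       (\<forall>k::nat. opnorm ((U * A) ^\<^sub>m k) \<le> g ^ (k div 2)))"
proof -
  define g where "g = 1 - (1 - lam^2)^2 * (1 - d)^2 / 8"
  have lam2: "lam^2 < 1" using assms by (simp add: abs_square_less_1)
  have g1: "g < 1"
  proof -
    have "0 < 1 - lam^2" using lam2 by simp
    moreover have "0 < 1 - d" using assms by simp
    ultimately have "0 < (1 - lam^2)^2 * (1 - d)^2" by simp
    thus ?thesis unfolding g_def by simp
  qed
  have g0: "0 \<le> g"
  proof -
    have h: "0 \<le> 1 - lam^2" "1 - lam^2 \<le> 1" using lam2 by auto
    have "(1 - lam^2)^2 \<le> 1" by (rule power_le_one[OF h])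
    moreover have "(1 - d)^2 \<le> 1" using assms by (intro power_le_one) auto
    ultimately have "(1 - lam^2)^2 * (1 - d)^2 \<le> 1" by (intro mult_le_one) auto
    thus ?thesis unfolding g_def by simp
  qed
  have main: "(\<forall>v \<in> carrier_vec n. vnorm (((U * A) ^\<^sub>m 2) *\<^sub>v v) \<le> g * vnorm v) \<and>
       (\<forall>k::nat. opnorm ((U * A) ^\<^sub>m k) \<le> g ^ (k div 2))"
    if Uc: "U \<in> carrier_mat n n" and Ac: "A \<in> carrier_mat n n" and Uu: "unitary_mat U"
      and Ah: "hermitian_mat A"
      and evh: "\<forall>\<mu>. eigenvalue A \<mu> \<and> \<mu> \<noteq> 1 \<longrightarrow> cmod \<mu> \<le> lam"
      and hyp: "\<forall>v \<in> eigenspace A 1. vnorm (orth_proj (eigenspace A 1) (U *\<^sub>v v)) \<le> d * vnorm v"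
    for n :: nat and U A :: "complex mat"
  proof -
    have UU: "mat_adjoint U * U = 1\<^sub>m n" using Uu Uc unfolding unitary_mat_def by auto
    have AH: "mat_adjoint A = A" using Ah unfolding hermitian_mat_def by auto
    obtain Q D where Qc: "Q \<in> carrier_mat n n" and QQ: "mat_adjoint Q * Q = 1\<^sub>m n"
      and QQ2: "Q * mat_adjoint Q = 1\<^sub>m n" and Dc: "D \<in> carrier_mat n n" and Dd: "diagonal_mat D"
      and QAQ: "mat_adjoint Q * A * Q = D"
      using spectral[OF Ac AH] by blast
    have ev: "\<And>i. i < n \<Longrightarrow> D $$ (i,i) \<noteq> 1 \<Longrightarrow> cmod (D $$ (i,i)) \<le> lam"
      using evh eig_diag[OF Qc QQ QQ2 Dc Dd Ac QAQ] by blast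
    define T where "T = U * A"
    have Tc: "T \<in> carrier_mat n n" unfolding T_def using mult_carrier_mat[OF Uc Ac] .
    have Tv: "\<And>x. x \<in> carrier_vec n \<Longrightarrow> T *\<^sub>v x = U *\<^sub>v (A *\<^sub>v x)"
      unfolding T_def by (rule assoc_mult_mat_vec[OF Uc Ac])
    have T1: "vnorm (T *\<^sub>v x) \<le> vnorm x" if x: "x \<in> carrier_vec n" for x
      using T1[OF Qc QQ QQ2 Dc Dd Ac QAQ Uc UU assms(1) assms(2) assms(3) assms(4) _ hyp x] ev Tv[OF x] by auto
    have T2: "vnorm (T *\<^sub>v (T *\<^sub>v x)) \<le> g * vnorm x" if x: "x \<in> carrier_vec n" for x
    proof -
      have Tx: "T *\<^sub>v x \<in> carrier_vec n" using Tc x by simp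
      have "vnorm (U *\<^sub>v (A *\<^sub>v (U *\<^sub>v (A *\<^sub>v x)))) \<le> g * vnorm x"
        using T2[OF Qc QQ QQ2 Dc Dd Ac QAQ Uc UU assms(1) assms(2) assms(3) assms(4) _ hyp x] ev
        unfolding g_def by blast
      thus ?thesis using Tv[OF x] Tv[OF Tx] by simp
    qed
    have part1: "\<forall>v \<in> carrier_vec n. vnorm ((T ^\<^sub>m 2) *\<^sub>v v) \<le> g * vnorm v"
    proof
      fix v :: "complex vec" assume v: "v \<in> carrier_vec n"
      have Tv': "T *\<^sub>v v \<in> carrier_vec n" using Tc v by simp
      have "(T ^\<^sub>m 2) *\<^sub>v v = T *\<^sub>v (T *\<^sub>v v)"
        using pow_vec[OF Tc v, of 1] pow_vec[OF Tc Tv', of 0] pow0_vec[OF Tc] Tc v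
        by (simp add: numeral_2_eq_2)
      thus "vnorm ((T ^\<^sub>m 2) *\<^sub>v v) \<le> g * vnorm v" using T2[OF v] by simp
    qed
    have part2: "\<forall>k::nat. opnorm (T ^\<^sub>m k) \<le> g ^ (k div 2)"
    proof
      fix k :: nat
      show "opnorm (T ^\<^sub>m k) \<le> g ^ (k div 2)"
        by (rule opnorm_bound[OF pow_carrier_mat[OF Tc]]) (use g0 pow_bound[OF Tc g0 T1 T2] in auto)
    qed
    show ?thesis using part1 part2 unfolding T_def by blast
  qed
  show ?thesis using g1 main by blast
qed


end
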